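(* Under Assumptions 1, 2, 3 and 4 (stated in the context), for every node $i\in[n]$ and every $\alpha>0$, $$\lim_{t\to\infty}\frac1t\log\mathsf P\Big(-\frac1t\log q_i^{(t)}(\theta_M)\ge\alpha\Big)\le-\min_{k\in[M-1]}\frac{K(\theta_M,\theta_k)^2}{2L^2d},$$ where $d$ is the period of $W$.
   Context: There are $n$ nodes and a finite set of hypotheses $\Theta=\{\theta_1,\dots,\theta_M\}$. Node $i$ has an observation space $\mathcal{X}_i$; $\mathcal{X}=\mathcal{X}_1\times\cdots\times\mathcal{X}_n$. For each $k\in[M]$, $f(\cdot;\theta_k)$ is a joint probability distribution on $\mathcal{X}$ with $i$-th marginal $f_i(\cdot;\theta_k)$. The true hypothesis is $\theta_M$: the observation profiles $X^{(t)}=(X_1^{(t)},\dots,X_n^{(t)})$, $t=1,2,\dots$, are i.i.d. over $t$ with law $f(\cdot;\theta_M)$ (components may be dependent). $\mathsf{P}$ is the induced probability measure; $D(\cdot\|\cdot)$ is KL divergence. $W$ is an $n\times n$ row-stochastic nonnegative matrix with, for $j\ne i$, $W_{ij}>0$ iff there is a directed edge from $j$ to $i$ in the communication graph. Learning rule: initial private beliefs $\mathbf q_i^{(0)}$ (probability vectors on $\Theta$); for $t\ge1$, $k\in[M]$: $b_i^{(t)}(\theta_k)=\frac{f_i(X_i^{(t)};\theta_k)q_i^{(t-1)}(\theta_k)}{\sum_{a}f_i(X_i^{(t)};\theta_a)q_i^{(t-1)}(\theta_a)}$ and $q_i^{(t)}(\theta_k)=\frac{\exp(\sum_j W_{ij}\log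 b_j^{(t)}(\theta_k))}{\sum_a\exp(\sum_j W_{ij}\log b_j^{(t)}(\theta_a))}$. Assumption 1: for every $k\ne j$ there is a node $i$ with $D(f_i(\cdot;\theta_k)\|f_i(\cdot;\theta_j))>0$. Assumption 2: the communication graph is strongly connected ($W$ irreducible). Assumption 3: $q_i^{(0)}(\theta_k)>0$ for all $i,k$. Assumption 4: there is $L>0$ with $\max_{i}\max_{j,k\in[M]}\sup_{x\in\mathcal X_i}\big|\log\frac{f_i(x;\theta_j)}{f_i(x;\theta_k)}\big|\le L$. $d$ is the period of the irreducible Markov chain with transition matrix $W$. $\mathbf v$ is the stationary distribution of $W$ and $K(\theta_M,\theta_k)=\sum_{i=1}^n v_iD(f_i(\cdot;\theta_M)\|f_i(\cdot;\theta_k))$. *)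

theory Defs
  imports "HOL-Probability.Probability"
begin

text \<open>Nodes are indexed by 0..n-1, hypotheses by 1..M (true hypothesis: M).\<close>

fun matpow :: "nat \<Rightarrow> (nat \<Rightarrow> nat \<Rightarrow> real) \<Rightarrow> nat \<Rightarrow> nat \<Rightarrow> nat \<Rightarrow> real" where
  "matpow n W 0 i j = (if i = j then 1 else 0)"
| "matpow n W (Suc t) i j = (\<Sum>l<n. matpow n W t i l * W l j)"

definition row_stochastic :: "nat \<Rightarrow> (nat \<Rightarrow> nat \<Rightarrow> real) \<Rightarrow> bool" where
  "row_stochastic n W \<longleftrightarrow>
     (\<forall>i<n. \<forall>j<n. 0 \<le> W i j) \<and> (\<forall>i<n. (\<Sum>j<n. W i j) = 1)"

definition irreducible_mat :: "nat \<Rightarrow> (nat \<Rightarrow> nat \<Rightarrow> real) \<Rightarrow> bool" where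
  "irreducible_mat n W \<longleftrightarrow> (\<forall>i<n. \<forall>j<n. \<exists>t. 0 < matpow n W t i j)"

text \<open>Period of the Markov chain: gcd of all return times t \<ge> 1 with (W^t)_ii > 0.
  For an irreducible chain this is the common period of every state.\<close>
definition chain_period :: "nat \<Rightarrow> (nat \<Rightarrow> nat \<Rightarrow> real) \<Rightarrow> nat" where
  "chain_period n W = Gcd {t. 1 \<le> t \<and> (\<exists>i<n. 0 < matpow n W t i i)}"

definition stationary_dist :: "nat \<Rightarrow> (nat \<Rightarrow> nat \<Rightarrow> real) \<Rightarrow> (nat \<Rightarrow> real) \<Rightarrow> bool" where
  "stationary_dist n W v \<longleftrightarrow>
     (\<forall>i<n. 0 \<le> v i) \<and> (\<Sum>i<n. v i) = 1 \<and> (\<forall>j<n. (\<Sum>i<n. v i * W i j) = v j)"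

text \<open>KL divergence D(f_i(.;theta_a) || f_i(.;theta_b)) (natural log), where
  f i k is the density of f_i(.;theta_k) w.r.t. the base measure mu i.\<close>
definition KLD :: "(nat \<Rightarrow> 'a measure) \<Rightarrow> (nat \<Rightarrow> nat \<Rightarrow> 'a \<Rightarrow> real) \<Rightarrow> nat \<Rightarrow> nat \<Rightarrow> nat \<Rightarrow> real" where
  "KLD \<mu> f i a b = KL_divergence (exp 1) (density (\<mu> i) (\<lambda>x. ennreal (f i b x)))
                                          (density (\<mu> i) (\<lambda>x. ennreal (f i a x)))"

definition Kdiv :: "nat \<Rightarrow> (nat \<Rightarrow> real) \<Rightarrow> (nat \<Rightarrow> 'a measure) \<Rightarrow> (nat \<Rightarrow> nat \<Rightarrow> 'a \<Rightarrow> real)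
                    \<Rightarrow> nat \<Rightarrow> nat \<Rightarrow> real" where
  "Kdiv n v \<mu> f M k = (\<Sum>i<n. v i * KLD \<mu> f i M k)"

definition priv_belief :: "nat \<Rightarrow> (nat \<Rightarrow> nat \<Rightarrow> 'a \<Rightarrow> real) \<Rightarrow> (nat \<Rightarrow> nat \<Rightarrow> real)
                           \<Rightarrow> (nat \<Rightarrow> 'a) \<Rightarrow> nat \<Rightarrow> nat \<Rightarrow> real" where
  "priv_belief M f q x j k =
     f j k (x j) * q j k / (\<Sum>a\<in>{1..M}. f j a (x j) * q j a)"

definition agg_belief :: "nat \<Rightarrow> nat \<Rightarrow> (nat \<Rightarrow> nat \<Rightarrow> real) \<Rightarrow> (nat \<Rightarrow> nat \<Rightarrow> real)
                          \<Rightarrow> nat \<Rightarrow> nat \<Rightarrow> real" where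
  "agg_belief n M W b i k =
     exp (\<Sum>j<n. W i j * ln (b j k)) / (\<Sum>a\<in>{1..M}. exp (\<Sum>j<n. W i j * ln (b j a)))"

text \<open>Beliefs q_i^{(t)}(theta_k) along an observation path xs (xs t = profile X^{(t)}, t \<ge> 1).\<close>
primrec belief :: "nat \<Rightarrow> nat \<Rightarrow> (nat \<Rightarrow> nat \<Rightarrow> real) \<Rightarrow> (nat \<Rightarrow> nat \<Rightarrow> 'a \<Rightarrow> real)
                   \<Rightarrow> (nat \<Rightarrow> nat \<Rightarrow> real) \<Rightarrow> (nat \<Rightarrow> nat \<Rightarrow> 'a) \<Rightarrow> nat \<Rightarrow> nat \<Rightarrow> nat \<Rightarrow> real" where
  "belief n M W f q0 xs 0 = q0"
| "belief n M W f q0 xs (Suc t) =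
     agg_belief n M W (priv_belief M f (belief n M W f q0 xs t) (xs (Suc t)))"

definition eln :: "real \<Rightarrow> ereal" where
  "eln p = (if p \<le> 0 then -\<infinity> else ereal (ln p))"

end

theory Submission
  imports Defs
begin



context
  fixes n :: nat and W :: "nat \<Rightarrow> nat \<Rightarrow> real"
  assumes RS: "row_stochastic n W"
begin

lemma W_nonneg: "a < n \<Longrightarrow> b < n \<Longrightarrow> 0 \<le> W a b"
  using RS unfolding row_stochastic_def by auto

lemma W_sum: "a < n \<Longrightarrow> (\<Sum>b<n. W a b) = 1"
  using RS unfolding row_stochastic_def by auto

lemma matpow_nonneg: "j < n \<Longrightarrow> 0 \<le> matpow n W t i j"
  by (induction t arbitrary: j) (auto intro!: sum_nonneg mult_nonneg_nonneg W_nonneg)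

lemma matpow_rowsum: "i < n \<Longrightarrow> (\<Sum>j<n. matpow n W t i j) = 1"
proof (induction t)
  case 0
  then show ?case by simp
next
  case (Suc t)
  have "(\<Sum>j<n. matpow n W (Suc t) i j) = (\<Sum>j<n. \<Sum>l<n. matpow n W t i l * W l j)" by simp
  also have "\<dots> = (\<Sum>l<n. \<Sum>j<n. matpow n W t i l * W l j)" by (rule sum.swap)
  also have "\<dots> = (\<Sum>l<n. matpow n W t i l * (\<Sum>j<n. W l j))" by (simp only: sum_distrib_left)
  also have "\<dots> = (\<Sum>l<n. matpow n W t i l)" by (intro sum.cong) (auto simp: W_sum)
  finally show ?case using Suc by simp
qed

lemma matpow_le1: "i < n \<Longrightarrow> j < n \<Longrightarrow> matpow n W t i j \<le> 1"
proof -
  assume a: "i < n" "j < n"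
  have "matpow n W t i j \<le> (\<Sum>l<n. matpow n W t i l)"
    using a by (intro member_le_sum) (auto intro: matpow_nonneg)
  then show ?thesis using matpow_rowsum[OF a(1)] by simp
qed

lemma matpow_Suc_left: "i < n \<Longrightarrow> j < n \<Longrightarrow>
   matpow n W (Suc t) i j = (\<Sum>l<n. W i l * matpow n W t l j)"
proof (induction t arbitrary: j)
  case 0
  have "matpow n W (Suc 0) i j = (\<Sum>l<n. (if i = l then 1 else 0) * W l j)"
    by simp
  also have "\<dots> = (\<Sum>l<n. if i = l then W l j else 0)"
    by (intro sum.cong) auto
  also have "\<dots> = W i j" using 0 by simp
  also have "\<dots> = (\<Sum>l<n. if l = j then W i l else 0)" using 0 by simp
  also have "\<dots> = (\<Sum>l<n. W i l * matpow n W 0 l j)"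
    by (intro sum.cong) auto
  finally show ?case .
next
  case (Suc t)
  have "matpow n W (Suc (Suc t)) i j = (\<Sum>l<n. matpow n W (Suc t) i l * W l j)" by simp
  also have "\<dots> = (\<Sum>l<n. (\<Sum>m<n. W i m * matpow n W t m l) * W l j)"
    using Suc by (intro sum.cong) auto
  also have "\<dots> = (\<Sum>l<n. \<Sum>m<n. W i m * (matpow n W t m l * W l j))"
    by (simp only: sum_distrib_right mult.assoc)
  also have "\<dots> = (\<Sum>m<n. \<Sum>l<n. W i m * (matpow n W t m l * W l j))" by (rule sum.swap)
  also have "\<dots> = (\<Sum>m<n. W i m * (\<Sum>l<n. matpow n W t m l * W l j))"
    by (simp only: sum_distrib_left)
  also have "\<dots> = (\<Sum>m<n. W i m * matpow n W (Suc t) m j)" by simp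
  finally show ?case .
qed

lemma matpow_stat: "stationary_dist n W v \<Longrightarrow> j < n \<Longrightarrow> (\<Sum>i<n. v i * matpow n W t i j) = v j"
proof (induction t arbitrary: j)
  case 0
  have "(\<Sum>i<n. v i * matpow n W 0 i j) = (\<Sum>i<n. if i = j then v i else 0)"
    by (intro sum.cong) auto
  then show ?case using 0 by simp
next
  case (Suc t)
  have "(\<Sum>i<n. v i * matpow n W (Suc t) i j) = (\<Sum>i<n. \<Sum>l<n. v i * (matpow n W t i l * W l j))"
    by (simp only: matpow.simps sum_distrib_left)
  also have "\<dots> = (\<Sum>l<n. \<Sum>i<n. v i * (matpow n W t i l * W l j))" by (rule sum.swap)
  also have "\<dots> = (\<Sum>l<n. (\<Sum>i<n. v i * matpow n W t i l) * W l j)"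
    by (simp only: sum_distrib_right mult.assoc)
  also have "\<dots> = (\<Sum>l<n. v l * W l j)" using Suc by (intro sum.cong) auto
  also have "\<dots> = v j" using Suc unfolding stationary_dist_def by auto
  finally show ?case .
qed

end



lemma multi_BW:
  fixes g :: "nat \<Rightarrow> nat \<Rightarrow> real"
  assumes "\<And>t j. j < m \<Longrightarrow> \<bar>g t j\<bar> \<le> B"
  shows "\<exists>\<sigma>. strict_mono \<sigma> \<and> (\<forall>j<m. convergent (\<lambda>t. g (\<sigma> t) j))"
  using assms
proof (induction m)
  case 0
  show ?case by (rule exI[of _ id]) (auto simp: strict_mono_def)
next
  case (Suc m)
  then obtain \<sigma> where \<sigma>: "strict_mono \<sigma>" "\<forall>j<m. convergent (\<lambda>t. g (\<sigma> t) j)" by auto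
  have "bounded (range (\<lambda>t. g (\<sigma> t) m))"
    using Suc.prems by (intro boundedI[of _ B]) auto
  then obtain l \<tau> where \<tau>: "strict_mono (\<tau>::nat\<Rightarrow>nat)" "((\<lambda>t. g (\<sigma> t) m) \<circ> \<tau>) \<longlonglongrightarrow> l"
    using bounded_imp_convergent_subsequence by blast
  have "strict_mono (\<sigma> \<circ> \<tau>)" using \<sigma>(1) \<tau>(1) by (simp add: strict_mono_o)
  moreover have "\<forall>j<Suc m. convergent (\<lambda>t. g ((\<sigma> \<circ> \<tau>) t) j)"
  proof (intro allI impI)
    fix j assume "j < Suc m"
    show "convergent (\<lambda>t. g ((\<sigma> \<circ> \<tau>) t) j)"
    proof (cases "j = m")
      case True
      then show ?thesis using \<tau>(2) by (auto simp: convergent_def o_def)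
    next
      case False
      then have "convergent (\<lambda>t. g (\<sigma> t) j)" using \<sigma>(2) \<open>j < Suc m\<close> by auto
      from convergent_subseq_convergent[OF this \<tau>(1)] show ?thesis by (simp add: o_def)
    qed
  qed
  ultimately show ?case by blast
qed

context
  fixes n :: nat and W :: "nat \<Rightarrow> nat \<Rightarrow> real"
  assumes RS: "row_stochastic n W" and IR: "irreducible_mat n W"
begin

lemma max_principle:
  assumes fx: "\<And>a. a < n \<Longrightarrow> (\<Sum>b<n. W a b * \<gamma> b) = \<gamma> a"
    and a0: "a0 < n" and mx: "\<And>b. b < n \<Longrightarrow> \<gamma> b \<le> \<gamma> a0"
    and l: "l < n"
  shows "\<gamma> l = \<gamma> a0"
proof -
  have step: "\<gamma> l = \<gamma> a0" if p: "p < n" "\<gamma> p = \<gamma> a0" "W p l > 0" "l < n" for p l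
  proof (rule ccontr)
    assume ne: "\<gamma> l \<noteq> \<gamma> a0"
    have "(\<Sum>b<n. W p b * (\<gamma> a0 - \<gamma> b)) = \<gamma> a0 * (\<Sum>b<n. W p b) - (\<Sum>b<n. W p b * \<gamma> b)"
      by (simp add: algebra_simps sum_subtractf sum_distrib_left)
    also have "\<dots> = 0" using fx[OF p(1)] p(2) W_sum[OF RS p(1)] by simp
    finally have z: "(\<Sum>b<n. W p b * (\<gamma> a0 - \<gamma> b)) = 0" .
    have "\<forall>b\<in>{..<n}. W p b * (\<gamma> a0 - \<gamma> b) = 0"
      using z by (subst sum_nonneg_eq_0_iff[symmetric])
        (auto intro!: mult_nonneg_nonneg W_nonneg[OF RS] p mx)
    then have "W p l * (\<gamma> a0 - \<gamma> l) = 0" using p(4) by auto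
    then show False using p(3) ne by simp
  qed
  have "\<gamma> l = \<gamma> a0" if "l < n" "0 < matpow n W t a0 l" for t l
    using that
  proof (induction t arbitrary: l)
    case 0
    then show ?case by (simp split: if_splits)
  next
    case (Suc t)
    have "0 < (\<Sum>p<n. matpow n W t a0 p * W p l)" using Suc.prems by simp
    then obtain p where p: "p < n" "0 < matpow n W t a0 p * W p l"
      by (metis (no_types, lifting) lessThan_iff less_irrefl sum_pos2 sum_nonpos
          not_less order.strict_iff_not)
    have "0 \<le> matpow n W t a0 p" using matpow_nonneg[OF RS p(1)] .
    have "0 \<le> W p l" using W_nonneg[OF RS p(1) Suc.prems(1)] .
    have "0 < matpow n W t a0 p" "0 < W p l"
      using p(2) \<open>0 \<le> matpow n W t a0 p\<close> \<open>0 \<le> W p l\<close>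
      by (auto simp: zero_less_mult_iff)
    then show ?case using Suc.IH[OF p(1)] step[OF p(1) _ _ Suc.prems(1)] by auto
  qed
  moreover obtain t where "0 < matpow n W t a0 l" using IR a0 l unfolding irreducible_mat_def by blast
  ultimately show ?thesis using l by blast
qed

end



context
  fixes n :: nat and W :: "nat \<Rightarrow> nat \<Rightarrow> real"
  assumes RS: "row_stochastic n W" and IR: "irreducible_mat n W"
begin

lemma cesaro:
  fixes h v :: "nat \<Rightarrow> real"
  assumes stat: "stationary_dist n W v" and i: "i < n" and eps: "0 < \<epsilon>"
  shows "eventually (\<lambda>t. (\<Sum>r<t. \<Sum>j<n. matpow n W (Suc r) i j * h j) / real t
            \<ge> (\<Sum>j<n. v j * h j) - \<epsilon>) sequentially"
proof (rule ccontr)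
  define F where "F r a = (\<Sum>j<n. matpow n W r a j * h j)" for r a
  define G where "G t a = (\<Sum>r<t. F (Suc r) a) / real t" for t a
  define H where "H = (\<Sum>j<n. \<bar>h j\<bar>)"
  define vh where "vh = (\<Sum>j<n. v j * h j)"
  have Fb: "\<bar>F r a\<bar> \<le> H" if "a < n" for r a
  proof -
    have "\<bar>F r a\<bar> \<le> (\<Sum>j<n. \<bar>matpow n W r a j * h j\<bar>)" unfolding F_def by (rule sum_abs)
    also have "\<dots> \<le> (\<Sum>j<n. \<bar>h j\<bar>)"
    proof (intro sum_mono)
      fix j assume j: "j \<in> {..<n}"
      have "0 \<le> matpow n W r a j" "matpow n W r a j \<le> 1"
        using matpow_nonneg[OF RS] matpow_le1[OF RS] that j by auto
      then show "\<bar>matpow n W r a j * h j\<bar> \<le> \<bar>h j\<bar>"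
        by (simp add: abs_mult mult_left_le_one_le)
    qed
    finally show ?thesis unfolding H_def .
  qed
  have H0: "0 \<le> H" unfolding H_def by (simp add: sum_nonneg)
  have Gb: "\<bar>G t a\<bar> \<le> H" if "a < n" for t a
  proof (cases "t = 0")
    case True then show ?thesis using H0 by (simp add: G_def)
  next
    case False
    have "\<bar>\<Sum>r<t. F (Suc r) a\<bar> \<le> (\<Sum>r<t. \<bar>F (Suc r) a\<bar>)" by (rule sum_abs)
    also have "\<dots> \<le> (\<Sum>r<t. H)" using Fb[OF that] by (intro sum_mono) auto
    finally have "\<bar>\<Sum>r<t. F (Suc r) a\<bar> \<le> real t * H" by simp
    then have "\<bar>\<Sum>r<t. F (Suc r) a\<bar> \<le> H * real t" by (simp only: mult.commute)
    moreover have "0 < real t" using False by simp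
    ultimately show ?thesis by (simp add: G_def abs_divide pos_divide_le_eq)
  qed
  have Fv: "(\<Sum>a<n. v a * F r a) = vh" for r
  proof -
    have "(\<Sum>a<n. v a * F r a) = (\<Sum>a<n. \<Sum>j<n. v a * matpow n W r a j * h j)"
      unfolding F_def by (simp add: sum_distrib_left mult.assoc)
    also have "\<dots> = (\<Sum>j<n. \<Sum>a<n. v a * matpow n W r a j * h j)" by (rule sum.swap)
    also have "\<dots> = (\<Sum>j<n. (\<Sum>a<n. v a * matpow n W r a j) * h j)"
      by (simp add: sum_distrib_right)
    also have "\<dots> = vh" unfolding vh_def using matpow_stat[OF RS stat] by simp
    finally show ?thesis .
  qed
  have Gv: "(\<Sum>a<n. v a * G t a) = vh" if "t \<ge> 1" for t
  proof -
    have "(\<Sum>a<n. v a * G t a) = (\<Sum>a<n. \<Sum>r<t. v a * F (Suc r) a) / real t"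
      unfolding G_def by (simp only: sum_divide_distrib sum_distrib_left times_divide_eq_right)
    also have "\<dots> = (\<Sum>r<t. \<Sum>a<n. v a * F (Suc r) a) / real t"
      by (subst sum.swap) (rule refl)
    also have "\<dots> = vh" using that by (simp add: Fv)
    finally show ?thesis .
  qed
  have FW: "(\<Sum>b<n. W a b * F r b) = F (Suc r) a" if "a < n" for a r
  proof -
    have "(\<Sum>b<n. W a b * F r b) = (\<Sum>b<n. \<Sum>j<n. W a b * matpow n W r b j * h j)"
      unfolding F_def by (simp add: sum_distrib_left mult.assoc)
    also have "\<dots> = (\<Sum>j<n. \<Sum>b<n. W a b * matpow n W r b j * h j)" by (rule sum.swap)
    also have "\<dots> = (\<Sum>j<n. (\<Sum>b<n. W a b * matpow n W r b j) * h j)"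
      by (simp add: sum_distrib_right)
    also have "\<dots> = F (Suc r) a" unfolding F_def
      using matpow_Suc_left[OF RS that] by (intro sum.cong) auto
    finally show ?thesis .
  qed
  have tele: "(\<Sum>r<t. F (Suc (Suc r)) a) = (\<Sum>r<t. F (Suc r) a) + F (Suc t) a - F 1 a" for t a
    by (induction t) auto
  have GW: "(\<Sum>b<n. W a b * G t b) - G t a = (F (Suc t) a - F 1 a) / real t" if "a < n" for a t
  proof -
    have "(\<Sum>b<n. W a b * G t b) = (\<Sum>b<n. \<Sum>r<t. W a b * F (Suc r) b) / real t"
      unfolding G_def by (simp only: sum_divide_distrib sum_distrib_left times_divide_eq_right)
    also have "\<dots> = (\<Sum>r<t. \<Sum>b<n. W a b * F (Suc r) b) / real t"
      by (subst sum.swap) (rule refl)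
    also have "\<dots> = (\<Sum>r<t. F (Suc (Suc r)) a) / real t" using FW[OF that] by simp
    finally show ?thesis unfolding G_def tele by (simp add: diff_divide_distrib add_divide_distrib)
  qed
  assume "\<not> eventually (\<lambda>t. (\<Sum>r<t. \<Sum>j<n. matpow n W (Suc r) i j * h j) / real t
            \<ge> (\<Sum>j<n. v j * h j) - \<epsilon>) sequentially"
  then have "\<forall>N. \<exists>t\<ge>N. G t i < vh - \<epsilon>"
    unfolding eventually_sequentially G_def F_def vh_def by (auto simp: not_le)
  then have "infinite {t. 1 \<le> t \<and> G t i < vh - \<epsilon>}"
    unfolding infinite_nat_iff_unbounded_le
  proof (intro allI)
    fix m :: nat
    assume "\<forall>N. \<exists>t\<ge>N. G t i < vh - \<epsilon>"
    then obtain t where "t \<ge> max m 1" "G t i < vh - \<epsilon>" by blast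
    then show "\<exists>t\<ge>m. t \<in> {t. 1 \<le> t \<and> G t i < vh - \<epsilon>}" by auto
  qed
  then obtain \<phi> :: "nat \<Rightarrow> nat" where \<phi>: "strict_mono \<phi>" "\<And>t. 1 \<le> \<phi> t \<and> G (\<phi> t) i < vh - \<epsilon>"
    using infinite_enumerate by blast
  obtain \<sigma> where \<sigma>: "strict_mono \<sigma>" "\<forall>a<n. convergent (\<lambda>t. G (\<phi> (\<sigma> t)) a)"
    using multi_BW[of n "\<lambda>t a. G (\<phi> t) a" H] Gb by auto
  define \<psi> where "\<psi> = \<phi> \<circ> \<sigma>"
  have \<psi>: "strict_mono \<psi>" "\<And>t. 1 \<le> \<psi> t" "\<And>t. G (\<psi> t) i < vh - \<epsilon>"
    using \<phi> \<sigma> by (auto simp: \<psi>_def strict_mono_o)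
  define \<gamma> where "\<gamma> a = lim (\<lambda>t. G (\<psi> t) a)" for a
  have lim\<gamma>: "(\<lambda>t. G (\<psi> t) a) \<longlonglongrightarrow> \<gamma> a" if "a < n" for a
    using \<sigma>(2) that unfolding \<gamma>_def \<psi>_def by (simp add: convergent_LIMSEQ_iff)
  have \<gamma>i: "\<gamma> i \<le> vh - \<epsilon>"
    using lim\<gamma>[OF i] \<psi>(3) by (intro LIMSEQ_le_const2) (auto intro: less_imp_le)
  have L1: "(\<lambda>t. \<Sum>a<n. v a * G (\<psi> t) a) \<longlonglongrightarrow> (\<Sum>a<n. v a * \<gamma> a)"
    using lim\<gamma> by (intro tendsto_intros) auto
  have eqv: "(\<lambda>t. \<Sum>a<n. v a * G (\<psi> t) a) = (\<lambda>t. vh)" using Gv \<psi>(2) by auto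
  have "(\<lambda>t. vh) \<longlonglongrightarrow> (\<Sum>a<n. v a * \<gamma> a)" using L1 unfolding eqv .
  then have v\<gamma>: "(\<Sum>a<n. v a * \<gamma> a) = vh" by (simp add: LIMSEQ_const_iff)
  have fx: "(\<Sum>b<n. W a b * \<gamma> b) = \<gamma> a" if a: "a < n" for a
  proof -
    have A: "(\<lambda>t. (\<Sum>b<n. W a b * G (\<psi> t) b) - G (\<psi> t) a) \<longlonglongrightarrow> (\<Sum>b<n. W a b * \<gamma> b) - \<gamma> a"
      using lim\<gamma> a by (intro tendsto_intros) auto
    have B: "(\<lambda>t. (\<Sum>b<n. W a b * G (\<psi> t) b) - G (\<psi> t) a) \<longlonglongrightarrow> 0"
    proof (rule Lim_null_comparison)
      show "(\<lambda>t. 2 * H / real t) \<longlonglongrightarrow> 0" by (rule lim_const_over_n)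
      show "\<forall>\<^sub>F t in sequentially. norm ((\<Sum>b<n. W a b * G (\<psi> t) b) - G (\<psi> t) a) \<le> 2 * H / real t"
        using eventually_ge_at_top[of 1]
      proof eventually_elim
        case (elim t)
        have "norm ((\<Sum>b<n. W a b * G (\<psi> t) b) - G (\<psi> t) a) = \<bar>F (Suc (\<psi> t)) a - F 1 a\<bar> / real (\<psi> t)"
          using GW[OF a] by simp
        also have "\<dots> \<le> 2 * H / real (\<psi> t)"
          using Fb[OF a, of "Suc (\<psi> t)"] Fb[OF a, of 1] \<psi>(2)[of t]
          by (intro divide_right_mono) auto
        also have "\<dots> \<le> 2 * H / real t"
          using seq_suble[OF \<psi>(1), of t] elim H0
          by (intro divide_left_mono) auto
        finally show ?case .
      qed
    qed
    from LIMSEQ_unique[OF A B] show ?thesis by simp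
  qed
  define m where "m = Max (\<gamma> ` {..<n})"
  have "m \<in> \<gamma> ` {..<n}" unfolding m_def using i by (intro Max_in) auto
  then obtain a0 where a0: "a0 < n" "\<gamma> a0 = m" by auto
  have mx: "\<gamma> b \<le> \<gamma> a0" if "b < n" for b using that a0 unfolding m_def by auto
  have allm: "\<gamma> b = m" if "b < n" for b
    using max_principle[OF RS IR fx a0(1) mx that] a0 by auto
  have "(\<Sum>a<n. v a * \<gamma> a) = (\<Sum>a<n. v a * m)" by (intro sum.cong) (auto simp: allm)
  also have "\<dots> = (\<Sum>a<n. v a) * m" by (simp add: sum_distrib_right)
  also have "\<dots> = m" using stat unfolding stationary_dist_def by simp
  finally have "m = vh" using v\<gamma> by simp
  then show False using \<gamma>i allm[OF i] eps by simp
qed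

end



definition LLR :: "(nat \<Rightarrow> nat \<Rightarrow> 'a \<Rightarrow> real) \<Rightarrow> nat \<Rightarrow> nat \<Rightarrow> nat \<Rightarrow> 'a \<Rightarrow> real" where
  "LLR f M j k y = ln (f j k y) - ln (f j M y)"

context
  fixes n M :: nat and W :: "nat \<Rightarrow> nat \<Rightarrow> real" and f :: "nat \<Rightarrow> nat \<Rightarrow> 'a \<Rightarrow> real"
    and qi :: "nat \<Rightarrow> nat \<Rightarrow> real" and xs :: "nat \<Rightarrow> nat \<Rightarrow> 'a"
  assumes M1: "1 \<le> M"
    and A3: "\<And>j k. j < n \<Longrightarrow> k \<in> {1..M} \<Longrightarrow> 0 < qi j k"
    and fpos: "\<And>j k s. j < n \<Longrightarrow> k \<in> {1..M} \<Longrightarrow> 1 \<le> s \<Longrightarrow> 0 < f j k (xs s j)"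
begin

abbreviation "q t \<equiv> belief n M W f qi xs t"

lemma agg_pos: "0 < agg_belief n M W b i k"
proof -
  have "0 < (\<Sum>a\<in>{1..M}. exp (\<Sum>j<n. W i j * ln (b j a)))"
    using M1 by (intro sum_pos) auto
  then show ?thesis unfolding agg_belief_def by simp
qed

lemma agg_sum: "(\<Sum>k\<in>{1..M}. agg_belief n M W b i k) = 1"
proof -
  have "0 < (\<Sum>a\<in>{1..M}. exp (\<Sum>j<n. W i j * ln (b j a)))"
    using M1 by (intro sum_pos) auto
  then show ?thesis unfolding agg_belief_def by (simp add: sum_divide_distrib[symmetric])
qed

lemma q_pos: "j < n \<Longrightarrow> k \<in> {1..M} \<Longrightarrow> 0 < q t j k"
  by (cases t) (auto simp: A3 agg_pos)

lemma q_sum: "(\<Sum>k\<in>{1..M}. q (Suc t) i k) = 1"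
  unfolding belief.simps by (rule agg_sum)

lemma ln_agg_diff: "ln (agg_belief n M W b i k) - ln (agg_belief n M W b i M)
    = (\<Sum>j<n. W i j * (ln (b j k) - ln (b j M)))"
proof -
  define S where "S = (\<Sum>a\<in>{1..M}. exp (\<Sum>j<n. W i j * ln (b j a)))"
  have S: "0 < S" unfolding S_def using M1 by (intro sum_pos) auto
  have "ln (agg_belief n M W b i k) - ln (agg_belief n M W b i M)
       = (\<Sum>j<n. W i j * ln (b j k)) - (\<Sum>j<n. W i j * ln (b j M))"
    unfolding agg_belief_def S_def[symmetric] using S by (simp add: ln_div)
  also have "\<dots> = (\<Sum>j<n. W i j * (ln (b j k) - ln (b j M)))"
    by (simp add: sum_subtractf right_diff_distrib)
  finally show ?thesis .
qed

definition r :: "nat \<Rightarrow> nat \<Rightarrow> nat \<Rightarrow> real" where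
  "r t j k = ln (q t j k) - ln (q t j M)"

lemma r_Suc: "k \<in> {1..M} \<Longrightarrow>
   r (Suc t) i k = (\<Sum>j<n. W i j * (LLR f M j k (xs (Suc t) j) + r t j k))"
proof -
  assume k: "k \<in> {1..M}"
  let ?b = "priv_belief M f (q t) (xs (Suc t))"
  have "ln (?b j k) - ln (?b j M) = LLR f M j k (xs (Suc t) j) + r t j k" if j: "j < n" for j
  proof -
    define D where "D = (\<Sum>a\<in>{1..M}. f j a (xs (Suc t) j) * q t j a)"
    have D: "0 < D" unfolding D_def using M1 j
      by (intro sum_pos) (auto intro!: mult_pos_pos fpos q_pos)
    have p: "0 < f j k (xs (Suc t) j)" "0 < q t j k" "0 < f j M (xs (Suc t) j)" "0 < q t j M"
      using k j M1 by (auto intro!: fpos q_pos)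
    show ?thesis unfolding priv_belief_def D_def[symmetric] LLR_def r_def
      using p D by (simp add: ln_div ln_mult)
  qed
  then show ?thesis unfolding r_def[of "Suc t"] belief.simps ln_agg_diff
    by (intro sum.cong) (auto simp: r_def)
qed

lemma Wsum_matpow:
  assumes RS: "row_stochastic n W" and i: "i < n"
  shows "(\<Sum>j<n. W i j * (\<Sum>l<n. matpow n W m j l * g l)) = (\<Sum>l<n. matpow n W (Suc m) i l * g l)"
proof -
  have "(\<Sum>j<n. W i j * (\<Sum>l<n. matpow n W m j l * g l)) = (\<Sum>j<n. \<Sum>l<n. W i j * matpow n W m j l * g l)"
    by (simp add: sum_distrib_left mult.assoc)
  also have "\<dots> = (\<Sum>l<n. \<Sum>j<n. W i j * matpow n W m j l * g l)" by (rule sum.swap)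
  also have "\<dots> = (\<Sum>l<n. (\<Sum>j<n. W i j * matpow n W m j l) * g l)"
    by (simp add: sum_distrib_right)
  also have "\<dots> = (\<Sum>l<n. matpow n W (Suc m) i l * g l)"
    using matpow_Suc_left[OF RS i] by (intro sum.cong) auto
  finally show ?thesis .
qed

lemma r_closed:
  assumes RS: "row_stochastic n W" and k: "k \<in> {1..M}"
  shows "i < n \<Longrightarrow> r t i k = (\<Sum>s<t. \<Sum>j<n. matpow n W (Suc s) i j * LLR f M j k (xs (t - s) j))
             + (\<Sum>j<n. matpow n W t i j * r 0 j k)"
proof (induction t arbitrary: i)
  case 0
  have "(\<Sum>j<n. matpow n W 0 i j * r 0 j k) = (\<Sum>j<n. if i = j then r 0 j k else 0)"
    by (intro sum.cong) auto
  then show ?case using 0 by simp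
next
  case (Suc t)
  define A where "A j = (\<Sum>s<t. \<Sum>l<n. matpow n W (Suc s) j l * LLR f M l k (xs (t - s) l))" for j
  define B where "B j = (\<Sum>l<n. matpow n W t j l * r 0 l k)" for j
  have "r (Suc t) i k = (\<Sum>j<n. W i j * (LLR f M j k (xs (Suc t) j) + r t j k))"
    using r_Suc[OF k] .
  also have "\<dots> = (\<Sum>j<n. W i j * LLR f M j k (xs (Suc t) j)) + (\<Sum>j<n. W i j * A j)
       + (\<Sum>j<n. W i j * B j)"
    using Suc.IH by (simp add: A_def B_def sum.distrib distrib_left)
  also have "(\<Sum>j<n. W i j * A j) = (\<Sum>s<t. \<Sum>j<n. W i j * (\<Sum>l<n. matpow n W (Suc s) j l * LLR f M l k (xs (t - s) l)))"
    unfolding A_def by (simp add: sum_distrib_left sum.swap[of _ "{..<n}" "{..<t}"])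
  also have "\<dots> = (\<Sum>s<t. \<Sum>l<n. matpow n W (Suc (Suc s)) i l * LLR f M l k (xs (t - s) l))"
    by (rule sum.cong[OF refl]) (rule Wsum_matpow[OF RS Suc.prems])
  also have "(\<Sum>j<n. W i j * B j) = (\<Sum>l<n. matpow n W (Suc t) i l * r 0 l k)"
    unfolding B_def by (rule Wsum_matpow[OF RS Suc.prems])
  also have "(\<Sum>j<n. W i j * LLR f M j k (xs (Suc t) j)) = (\<Sum>j<n. matpow n W (Suc 0) i j * LLR f M j k (xs (Suc t - 0) j))"
    using matpow_Suc_left[OF RS Suc.prems, of _ 0] by (intro sum.cong) (auto simp: sum.delta if_distrib cong: if_cong)
  finally show ?case by (simp only: sum.lessThan_Suc_shift diff_Suc_Suc)
qed

lemma ln_closed: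
  assumes RS: "row_stochastic n W" and k: "k \<in> {1..M}" and i: "i < n"
  shows "ln (q t i k) - ln (q t i M) =
     (\<Sum>s<t. \<Sum>j<n. matpow n W (Suc s) i j * LLR f M j k (xs (t - s) j))
             + (\<Sum>j<n. matpow n W t i j * (ln (qi j k) - ln (qi j M)))"
  using r_closed[OF RS k i, of t] unfolding r_def by simp

end

lemma belief_closed:
  fixes n M :: nat and W :: "nat \<Rightarrow> nat \<Rightarrow> real" and f :: "nat \<Rightarrow> nat \<Rightarrow> 'a \<Rightarrow> real"
    and Q :: "nat \<Rightarrow> nat \<Rightarrow> real" and xs :: "nat \<Rightarrow> nat \<Rightarrow> 'a"
  assumes M1: "1 \<le> M"
    and A3: "\<And>j k. j < n \<Longrightarrow> k \<in> {1..M} \<Longrightarrow> 0 < Q j k"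
    and fpos: "\<And>j k s. j < n \<Longrightarrow> k \<in> {1..M} \<Longrightarrow> 1 \<le> s \<Longrightarrow> 0 < f j k (xs s j)"
    and RS: "row_stochastic n W" and k: "k \<in> {1..M}" and i: "i < n"
  shows "ln (belief n M W f Q xs t i k) - ln (belief n M W f Q xs t i M) =
     (\<Sum>s<t. \<Sum>j<n. matpow n W (Suc s) i j * LLR f M j k (xs (t - s) j))
             + (\<Sum>j<n. matpow n W t i j * (ln (Q j k) - ln (Q j M)))"
  by (rule ln_closed[where n=n and M=M and W=W and f=f and qi=Q and xs=xs, OF M1 A3 fpos RS k i])

lemma belief_pos_sum:
  fixes n M :: nat and W :: "nat \<Rightarrow> nat \<Rightarrow> real" and f :: "nat \<Rightarrow> nat \<Rightarrow> 'a \<Rightarrow> real"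
    and Q :: "nat \<Rightarrow> nat \<Rightarrow> real" and xs :: "nat \<Rightarrow> nat \<Rightarrow> 'a"
  assumes M1: "1 \<le> M"
    and A3: "\<And>j k. j < n \<Longrightarrow> k \<in> {1..M} \<Longrightarrow> 0 < Q j k"
    and fpos: "\<And>j k s. j < n \<Longrightarrow> k \<in> {1..M} \<Longrightarrow> 1 \<le> s \<Longrightarrow> 0 < f j k (xs s j)"
  shows "\<And>j k. j < n \<Longrightarrow> k \<in> {1..M} \<Longrightarrow> 0 < belief n M W f Q xs t j k"
    and "(\<Sum>k\<in>{1..M}. belief n M W f Q xs (Suc t) i k) = 1"
  using q_pos[where n=n and M=M and W=W and f=f and qi=Q and xs=xs, OF M1 A3 fpos]
    q_sum[where n=n and M=M and W=W and f=f and qi=Q and xs=xs, OF M1 A3 fpos] by auto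




lemma KL_facts:
  fixes \<mu> :: "'a measure" and fk fM :: "'a \<Rightarrow> real"
  assumes mk[measurable]: "fk \<in> borel_measurable \<mu>" and mM[measurable]: "fM \<in> borel_measurable \<mu>"
    and pos: "\<And>x. x \<in> space \<mu> \<Longrightarrow> 0 < fk x \<and> 0 < fM x"
    and pk: "prob_space (density \<mu> (\<lambda>x. ennreal (fk x)))"
    and pM: "prob_space (density \<mu> (\<lambda>x. ennreal (fM x)))"
    and bd: "\<And>x. x \<in> space \<mu> \<Longrightarrow> \<bar>ln (fk x / fM x)\<bar> \<le> L"
  shows "KL_divergence (exp 1) (density \<mu> (\<lambda>x. ennreal (fk x))) (density \<mu> (\<lambda>x. ennreal (fM x)))
           = - integral\<^sup>L (density \<mu> (\<lambda>x. ennreal (fM x))) (\<lambda>x. ln (fk x) - ln (fM x))"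
    and "0 \<le> KL_divergence (exp 1) (density \<mu> (\<lambda>x. ennreal (fk x))) (density \<mu> (\<lambda>x. ennreal (fM x)))"
proof -
  define \<nu> where "\<nu> = density \<mu> (\<lambda>x. ennreal (fM x))"
  interpret \<nu>: prob_space \<nu> unfolding \<nu>_def by (rule pM)
  have sp[simp]: "space \<nu> = space \<mu>" and st[simp]: "sets \<nu> = sets \<mu>" unfolding \<nu>_def by auto
  define \<rho> where "\<rho> x = fk x / fM x" for x
  have m\<rho>'[measurable]: "(\<lambda>x. fk x / fM x) \<in> borel_measurable \<nu>"
    by (subst measurable_cong_sets[OF st refl]) simp
  have m\<rho>[measurable]: "\<rho> \<in> borel_measurable \<nu>" unfolding \<rho>_def by (rule m\<rho>')
  have pos': "\<And>x. x \<in> space \<mu> \<Longrightarrow> 0 \<le> fk x / fM x \<and> fk x \<noteq> 0 \<and> fM x \<noteq> 0"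
    using pos by (metis divide_pos_pos less_imp_le less_irrefl)
  have e1: "density \<nu> (\<lambda>x. ennreal (\<rho> x)) = density \<mu> (\<lambda>x. ennreal (fk x))"
    unfolding \<nu>_def \<rho>_def using pos by (intro density_density_divide) (auto intro!: AE_I2 less_imp_le dest: pos)
  have e2: "density \<nu> (\<lambda>x. ennreal ((\<lambda>_. 1::real) x)) = \<nu>"
    by (simp add: density_1)
  have bd': "\<bar>log (exp 1) (1 / \<rho> x)\<bar> \<le> L" if "x \<in> space \<nu>" for x
  proof -
    have "log (exp 1) (1 / \<rho> x) = - ln (\<rho> x)" using pos that by (simp add: log_def \<rho>_def ln_div)
    then show ?thesis using bd that by (simp add: \<rho>_def)
  qed
  have KLeq: "KL_divergence (exp 1) (density \<nu> (\<lambda>x. ennreal (\<rho> x))) (density \<nu> (\<lambda>x. ennreal ((\<lambda>_. 1::real) x)))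
        = (\<integral>x. 1 * log (exp 1) (1 / \<rho> x) \<partial>\<nu>)"
    using pos' by (intro \<nu>.KL_density_density) (auto intro!: AE_I2 simp: \<rho>_def)
  have "(\<integral>x. 1 * log (exp 1) (1 / \<rho> x) \<partial>\<nu>) = (\<integral>x. - (ln (fk x) - ln (fM x)) \<partial>\<nu>)"
    using pos' by (intro Bochner_Integration.integral_cong refl) (auto simp: log_def \<rho>_def ln_div)
  also have "\<dots> = - (\<integral>x. ln (fk x) - ln (fM x) \<partial>\<nu>)" by (rule Bochner_Integration.integral_minus)
  finally have eqf: "(\<integral>x. 1 * log (exp 1) (1 / \<rho> x) \<partial>\<nu>) = - (\<integral>x. ln (fk x) - ln (fM x) \<partial>\<nu>)" .
  have "KL_divergence (exp 1) (density \<mu> (\<lambda>x. ennreal (fk x))) \<nu> = - (\<integral>x. ln (fk x) - ln (fM x) \<partial>\<nu>)"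
    using KLeq[unfolded e1 e2] eqf by simp
  then show "KL_divergence (exp 1) (density \<mu> (\<lambda>x. ennreal (fk x))) (density \<mu> (\<lambda>x. ennreal (fM x)))
           = - integral\<^sup>L (density \<mu> (\<lambda>x. ennreal (fM x))) (\<lambda>x. ln (fk x) - ln (fM x))"
    unfolding \<nu>_def .
  have "0 \<le> KL_divergence (exp 1) (density \<nu> (\<lambda>x. ennreal (\<rho> x))) (density \<nu> (\<lambda>x. ennreal ((\<lambda>_. 1::real) x)))"
  proof (rule \<nu>.KL_density_density_nonneg)
    show "1 < exp (1::real)" by simp
    show "prob_space (density \<nu> (\<lambda>x. ennreal (\<rho> x)))" unfolding e1 by (rule pk)
    show "prob_space (density \<nu> (\<lambda>x. ennreal ((\<lambda>_. 1::real) x)))" unfolding e2 by (rule \<nu>.prob_space_axioms)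
    show "integrable \<nu> (\<lambda>x. 1 * log (exp 1) (1 / \<rho> x))"
      using bd' by (intro \<nu>.integrable_const_bound[of _ L]) (auto intro!: AE_I2)
  qed (use pos' in \<open>auto intro!: AE_I2 simp: \<rho>_def\<close>)
  from this[unfolded e1 e2] show "0 \<le> KL_divergence (exp 1) (density \<mu> (\<lambda>x. ennreal (fk x))) (density \<mu> (\<lambda>x. ennreal (fM x)))"
    unfolding \<nu>_def .
qed




theorem lemma2:
  fixes n M :: nat
    and W :: "nat \<Rightarrow> nat \<Rightarrow> real"
    and \<mu> :: "nat \<Rightarrow> 'a measure"
    and f :: "nat \<Rightarrow> nat \<Rightarrow> 'a \<Rightarrow> real"
    and Q :: "(nat \<Rightarrow> 'a) measure"
    and P :: "'w measure"
    and X :: "nat \<Rightarrow> 'w \<Rightarrow> (nat \<Rightarrow> 'a)"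
    and q0 :: "nat \<Rightarrow> nat \<Rightarrow> real"
    and v :: "nat \<Rightarrow> real"
    and L \<alpha> :: real
    and i :: nat
  assumes M2: "2 \<le> M"
    and dens_meas: "\<And>j k. j < n \<Longrightarrow> k \<in> {1..M} \<Longrightarrow> f j k \<in> borel_measurable (\<mu> j)"
    and dens_nonneg: "\<And>j k x. j < n \<Longrightarrow> k \<in> {1..M} \<Longrightarrow> x \<in> space (\<mu> j) \<Longrightarrow> 0 \<le> f j k x"
    and dens_prob: "\<And>j k. j < n \<Longrightarrow> k \<in> {1..M} \<Longrightarrow>
                       prob_space (density (\<mu> j) (\<lambda>x. ennreal (f j k x)))"
    and Q_sets: "sets Q = sets (Pi\<^sub>M {..<n} \<mu>)"
    and Q_prob: "prob_space Q"
    and Q_marg: "\<And>j. j < n \<Longrightarrow>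
                   distr Q (\<mu> j) (\<lambda>y. y j) = density (\<mu> j) (\<lambda>x. ennreal (f j M x))"
    and P_prob: "prob_space P"
    and X_indep: "prob_space.indep_vars P (\<lambda>_. Pi\<^sub>M {..<n} \<mu>) X {1..}"
    and X_law: "\<And>t. 1 \<le> t \<Longrightarrow> distr P (Pi\<^sub>M {..<n} \<mu>) (X t) = Q"
    and W_stoch: "row_stochastic n W"
    and A1: "\<And>k j. k \<in> {1..M} \<Longrightarrow> j \<in> {1..M} \<Longrightarrow> k \<noteq> j \<Longrightarrow>
               \<exists>l<n. 0 < KLD \<mu> f l k j"
    and A2: "irreducible_mat n W"
    and A3: "\<And>j k. j < n \<Longrightarrow> k \<in> {1..M} \<Longrightarrow> 0 < q0 j k"
    and q0_prob: "\<And>j. j < n \<Longrightarrow> (\<Sum>k\<in>{1..M}. q0 j k) = 1"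
    and A4_pos: "0 < L"
    and A4: "\<And>j a b x. j < n \<Longrightarrow> a \<in> {1..M} \<Longrightarrow> b \<in> {1..M} \<Longrightarrow> x \<in> space (\<mu> j) \<Longrightarrow>
               0 < f j a x \<and> \<bar>ln (f j a x / f j b x)\<bar> \<le> L"
    and v_stat: "stationary_dist n W v"
    and i_node: "i < n"
    and \<alpha>_pos: "0 < \<alpha>"
  shows "limsup (\<lambda>t. ereal (1 / real t) *
            eln (measure P {\<omega> \<in> space P.
                  - (1 / real t) * ln (belief n M W f q0 (\<lambda>s. X s \<omega>) t i M) \<ge> \<alpha>}))
         \<le> ereal (- Min ((\<lambda>k. (Kdiv n v \<mu> f M k)\<^sup>2 / (2 * L\<^sup>2 * real (chain_period n W))) ` {1..M - 1}))"
proof -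
  interpret P: prob_space P by (rule P_prob)
  have M1: "1 \<le> M" using M2 by simp
  have ne: "{1..M-1} \<noteq> {}" using M2 by auto
  have Xm: "X s \<in> measurable P (Pi\<^sub>M {..<n} \<mu>)" if "1 \<le> s" for s
    using X_indep that unfolding P.indep_vars_def by auto
  have Xsp: "X s \<omega> j \<in> space (\<mu> j)" if "1 \<le> s" "\<omega> \<in> space P" "j < n" for s \<omega> j
    using measurable_space[OF Xm[OF that(1)] that(2)] that(3) by (auto simp: space_PiM)
  have fpos: "0 < f j k (X s \<omega> j)" if "j < n" "k \<in> {1..M}" "1 \<le> s" "\<omega> \<in> space P" for j k s \<omega>
    using A4[OF that(1) that(2) that(2) Xsp[OF that(3,4,1)]] by auto
  have LLRb: "\<bar>LLR f M j k y\<bar> \<le> L" if "j < n" "k \<in> {1..M}" "y \<in> space (\<mu> j)" for j k y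
  proof -
    have "M \<in> {1..M}" using M1 by auto
    from A4[OF that(1) that(2) this that(3)] A4[OF that(1) this this that(3)]
    have a: "0 < f j k y" "\<bar>ln (f j k y / f j M y)\<bar> \<le> L" "0 < f j M y" by auto
    then show ?thesis unfolding LLR_def by (simp add: ln_div)
  qed
  have KLDf: "KLD \<mu> f j M k = - integral\<^sup>L (density (\<mu> j) (\<lambda>x. ennreal (f j M x))) (LLR f M j k)
      \<and> 0 \<le> KLD \<mu> f j M k" if j: "j < n" and k: "k \<in> {1..M}" for j k
  proof -
    have Mi: "M \<in> {1..M}" using M1 by auto
    have eq: "LLR f M j k = (\<lambda>x. ln (f j k x) - ln (f j M x))" by (simp add: LLR_def fun_eq_iff)
    show ?thesis unfolding KLD_def eq
      using KL_facts[OF dens_meas[OF j k] dens_meas[OF j Mi] _ dens_prob[OF j k] dens_prob[OF j Mi], of L]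
        A4[OF j k Mi] A4[OF j Mi Mi] by auto
  qed
  define Kd where "Kd k = Kdiv n v \<mu> f M k" for k
  define \<rho> where "\<rho> = Min ((\<lambda>k. (Kd k + \<alpha>/2)\<^sup>2 / (2*L\<^sup>2)) ` {1..M-1})"
  define C where "C k = ln (2 * real (M-1)) + (\<Sum>j<n. \<bar>ln (q0 j k) - ln (q0 j M)\<bar>)" for k
  have Kd0: "0 \<le> Kd k" if "k \<in> {1..M}" for k
    unfolding Kd_def Kdiv_def
  proof (intro sum_nonneg mult_nonneg_nonneg)
    fix j assume j: "j \<in> {..<n}"
    show "0 \<le> v j" using v_stat j unfolding stationary_dist_def by auto
    show "0 \<le> KLD \<mu> f j M k" using KLDf[of j k] j that by auto
  qed
  define Y where "Y t k u \<omega> = (\<Sum>j<n. matpow n W (Suc (t - u)) i j * LLR f M j k (X u \<omega> j))" for t k u \<omega>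
  define E where "E t = {\<omega> \<in> space P. - (1 / real t) * ln (belief n M W f q0 (\<lambda>s. X s \<omega>) t i M) \<ge> \<alpha>}" for t
  define B where "B t k = {\<omega> \<in> space P. (\<Sum>u\<in>{1..t}. Y t k u \<omega>) \<ge> \<alpha> * real t - C k}" for t k
  have stepA: "E t \<subseteq> (\<Union>k\<in>{1..M-1}. B t k)" if t1: "1 \<le> t" and et: "exp (-\<alpha> * real t) \<le> 1/2" for t
  proof
    fix \<omega> assume "\<omega> \<in> E t"
    then have \<omega>: "\<omega> \<in> space P" and ineq: "- (1 / real t) * ln (belief n M W f q0 (\<lambda>s. X s \<omega>) t i M) \<ge> \<alpha>"
      unfolding E_def by auto
    define xs where "xs = (\<lambda>s. X s \<omega>)"
    have fpx: "\<And>j k s. j < n \<Longrightarrow> k \<in> {1..M} \<Longrightarrow> 1 \<le> s \<Longrightarrow> 0 < f j k (xs s j)"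
      unfolding xs_def using fpos \<omega> by auto
    obtain t' where tt: "t = Suc t'" using t1 by (cases t) auto
    have qsum: "(\<Sum>k\<in>{1..M}. belief n M W f q0 xs t i k) = 1"
      unfolding tt by (rule belief_pos_sum(2)) (use M1 A3 fpx in auto)
    define qq where "qq k = belief n M W f q0 xs t i k" for k
    have Mi: "M \<in> {1..M}" using M1 by auto
    have qq0: "0 < qq k" if "k \<in> {1..M}" for k unfolding qq_def
      by (rule belief_pos_sum(1)) (use M1 A3 fpx i_node that in auto)
    have tpos: "0 < real t" using t1 by simp
    have "\<alpha> * real t \<le> - ln (qq M)"
      using ineq tpos unfolding qq_def xs_def by (simp add: field_simps)
    then have "ln (qq M) \<le> - \<alpha> * real t" by simp
    then have "exp (ln (qq M)) \<le> exp (- \<alpha> * real t)" by simp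
    then have "qq M \<le> exp (- \<alpha> * real t)" using qq0[OF Mi] by simp
    then have qM: "qq M \<le> 1/2" using et by simp
    have ins: "{1..M} = insert M {1..M-1}" using M1 by auto
    have "(\<Sum>k\<in>{1..M}. qq k) = qq M + (\<Sum>k\<in>{1..M-1}. qq k)"
      unfolding ins by (subst sum.insert) auto
    then have s1: "(\<Sum>k\<in>{1..M-1}. qq k) = 1 - qq M" using qsum unfolding qq_def by simp
    have M1': "0 < real (M-1)" using M2 by simp
    obtain k where k: "k \<in> {1..M-1}" and qk: "qq k \<ge> 1 / (2 * real (M-1))"
    proof (rule ccontr)
      assume "\<not> ?thesis"
      then have lt: "\<forall>k\<in>{1..M-1}. qq k < 1 / (2 * real (M-1))" using that by (meson not_le)
      have "(\<Sum>k\<in>{1..M-1}. qq k) < (\<Sum>k\<in>{1..M-1}. 1 / (2 * real (M-1)))"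
        using lt ne by (intro sum_strict_mono) auto
      also have "\<dots> = 1/2" using M1' by simp
      finally show False using s1 qM by simp
    qed
    have kM: "k \<in> {1..M}" using k by auto
    have "ln (qq k) \<ge> ln (1 / (2 * real (M-1)))" using qk M1' by (intro ln_mono) auto
    then have lk: "ln (qq k) \<ge> - ln (2 * real (M-1))" using M1' by (simp add: ln_div)
    have cl: "ln (qq k) - ln (qq M) =
       (\<Sum>s<t. \<Sum>j<n. matpow n W (Suc s) i j * LLR f M j k (xs (t - s) j))
             + (\<Sum>j<n. matpow n W t i j * (ln (q0 j k) - ln (q0 j M)))"
      unfolding qq_def by (rule belief_closed) (use M1 A3 fpx W_stoch kM i_node in auto)
    have init: "(\<Sum>j<n. matpow n W t i j * (ln (q0 j k) - ln (q0 j M))) \<le> (\<Sum>j<n. \<bar>ln (q0 j k) - ln (q0 j M)\<bar>)"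
    proof (intro sum_mono)
      fix j assume j: "j \<in> {..<n}"
      have "0 \<le> matpow n W t i j" "matpow n W t i j \<le> 1"
        using matpow_nonneg[OF W_stoch] matpow_le1[OF W_stoch i_node] j by auto
      then have "\<bar>matpow n W t i j * (ln (q0 j k) - ln (q0 j M))\<bar> \<le> \<bar>ln (q0 j k) - ln (q0 j M)\<bar>"
        by (simp add: abs_mult mult_left_le_one_le)
      then show "matpow n W t i j * (ln (q0 j k) - ln (q0 j M)) \<le> \<bar>ln (q0 j k) - ln (q0 j M)\<bar>" by linarith
    qed
    have reidx: "(\<Sum>s<t. \<Sum>j<n. matpow n W (Suc s) i j * LLR f M j k (xs (t - s) j)) = (\<Sum>u\<in>{1..t}. Y t k u \<omega>)"
      unfolding Y_def xs_def
      by (rule sum.reindex_bij_witness[of _ "\<lambda>u. t - u" "\<lambda>s. t - s"]) auto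
    have "(\<Sum>u\<in>{1..t}. Y t k u \<omega>) \<ge> \<alpha> * real t - C k"
      using cl init lk \<open>ln (qq M) \<le> - \<alpha> * real t\<close> unfolding reidx C_def by linarith
    then show "\<omega> \<in> (\<Union>k\<in>{1..M-1}. B t k)" using k \<omega> unfolding B_def by auto
  qed
  have gmeas: "(\<lambda>y. \<Sum>j<n. c j * LLR f M j k (y j)) \<in> borel_measurable (Pi\<^sub>M {..<n} \<mu>)"
    if k: "k \<in> {1..M}" for k c
  proof (intro borel_measurable_sum borel_measurable_times borel_measurable_const)
    fix j assume j: "j \<in> {..<n}"
    have Mi: "M \<in> {1..M}" using M1 by auto
    have p: "(\<lambda>y. y j) \<in> measurable (Pi\<^sub>M {..<n} \<mu>) (\<mu> j)"
      using j by (rule measurable_component_singleton)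
    have a: "(\<lambda>y. f j k (y j)) \<in> borel_measurable (Pi\<^sub>M {..<n} \<mu>)"
      using measurable_compose[OF p dens_meas[OF _ k]] j by auto
    have b: "(\<lambda>y. f j M (y j)) \<in> borel_measurable (Pi\<^sub>M {..<n} \<mu>)"
      using measurable_compose[OF p dens_meas[OF _ Mi]] j by auto
    show "(\<lambda>y. LLR f M j k (y j)) \<in> borel_measurable (Pi\<^sub>M {..<n} \<mu>)"
      unfolding LLR_def using a b by measurable
  qed
  have Ymeas: "Y t k u \<in> borel_measurable P" if "k \<in> {1..M}" "1 \<le> u" for t k u
    unfolding Y_def using measurable_compose[OF Xm[OF that(2)] gmeas[OF that(1)]] by simp
  have Bsets: "B t k \<in> sets P" if "k \<in> {1..M}" for t k
  proof -
    have "(\<lambda>\<omega>. \<Sum>u\<in>{1..t}. Y t k u \<omega>) \<in> borel_measurable P"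
      using Ymeas[OF that] by (intro borel_measurable_sum) auto
    then show ?thesis unfolding B_def by measurable
  qed
  have stepB: "eventually (\<lambda>t. measure P (B t k) \<le> exp (- real t * ((Kd k + \<alpha>/2)\<^sup>2 / (2*L\<^sup>2)))) sequentially"
    if k1: "k \<in> {1..M-1}" for k
  proof -
    have kM: "k \<in> {1..M}" using k1 by auto
    have Mi: "M \<in> {1..M}" using M1 by auto
    define h where "h j = KLD \<mu> f j M k" for j
    define S where "S t = (\<Sum>r<t. \<Sum>j<n. matpow n W (Suc r) i j * h j)" for t
    have Kdh: "(\<Sum>j<n. v j * h j) = Kd k" unfolding h_def Kd_def Kdiv_def by simp
    have ces: "eventually (\<lambda>t. S t / real t \<ge> Kd k - \<alpha>/4) sequentially"
      using cesaro[OF W_stoch A2 v_stat i_node, of "\<alpha>/4" h] \<alpha>_pos unfolding S_def Kdh by simp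
    have "(\<lambda>t. C k / real t) \<longlonglongrightarrow> 0" by (rule lim_const_over_n)
    then have evC: "eventually (\<lambda>t. C k / real t < \<alpha>/4) sequentially"
      using \<alpha>_pos by (intro order_tendstoD(2)) auto
    have ELLR: "P.expectation (\<lambda>\<omega>. LLR f M j k (X u \<omega> j)) = - h j" if u: "1 \<le> u" and j: "j < n" for u j
    proof -
      have p: "(\<lambda>y. y j) \<in> measurable (Pi\<^sub>M {..<n} \<mu>) (\<mu> j)"
        using j by (intro measurable_component_singleton) auto
      have pQ: "(\<lambda>y. y j) \<in> measurable Q (\<mu> j)"
        using p by (subst measurable_cong_sets[OF Q_sets refl])
      have lm: "LLR f M j k \<in> borel_measurable (\<mu> j)"
        unfolding LLR_def using dens_meas[OF j kM] dens_meas[OF j Mi] by measurable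
      have lmP: "(\<lambda>y. LLR f M j k (y j)) \<in> borel_measurable (Pi\<^sub>M {..<n} \<mu>)"
        using measurable_compose[OF p lm] by simp
      have "P.expectation (\<lambda>\<omega>. LLR f M j k (X u \<omega> j))
          = integral\<^sup>L (distr P (Pi\<^sub>M {..<n} \<mu>) (X u)) (\<lambda>y. LLR f M j k (y j))"
        by (rule integral_distr[symmetric, OF Xm[OF u] lmP])
      also have "\<dots> = integral\<^sup>L Q (\<lambda>y. LLR f M j k (y j))" using X_law[OF u] by simp
      also have "\<dots> = integral\<^sup>L (distr Q (\<mu> j) (\<lambda>y. y j)) (LLR f M j k)"
        by (rule integral_distr[symmetric, OF pQ lm])
      also have "\<dots> = integral\<^sup>L (density (\<mu> j) (\<lambda>x. ennreal (f j M x))) (LLR f M j k)"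
        using Q_marg[OF j] by simp
      also have "\<dots> = - h j" using KLDf[OF j kM] unfolding h_def by simp
      finally show ?thesis .
    qed
    have Ybd: "\<bar>Y t k u \<omega>\<bar> \<le> L" if u: "1 \<le> u" and \<omega>: "\<omega> \<in> space P" for t u \<omega>
    proof -
      have "\<bar>Y t k u \<omega>\<bar> \<le> (\<Sum>j<n. \<bar>matpow n W (Suc (t - u)) i j * LLR f M j k (X u \<omega> j)\<bar>)"
        unfolding Y_def by (rule sum_abs)
      also have "\<dots> \<le> (\<Sum>j<n. matpow n W (Suc (t - u)) i j * L)"
      proof (intro sum_mono)
        fix j assume j: "j \<in> {..<n}"
        have "0 \<le> matpow n W (Suc (t - u)) i j" by (rule matpow_nonneg[OF W_stoch]) (use j in auto)
        moreover have "\<bar>LLR f M j k (X u \<omega> j)\<bar> \<le> L" using LLRb[OF _ kM Xsp[OF u \<omega>]] j by auto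
        ultimately show "\<bar>matpow n W (Suc (t - u)) i j * LLR f M j k (X u \<omega> j)\<bar> \<le> matpow n W (Suc (t - u)) i j * L"
          by (simp add: abs_mult mult_left_mono)
      qed
      also have "\<dots> = (\<Sum>j<n. matpow n W (Suc (t - u)) i j) * L" by (rule sum_distrib_right[symmetric])
      also have "\<dots> = L" by (simp only: matpow_rowsum[OF W_stoch i_node] mult_1)
      finally show ?thesis .
    qed
    have EY: "P.expectation (Y t k u) = - (\<Sum>j<n. matpow n W (Suc (t - u)) i j * h j)" if u: "1 \<le> u" for t u
    proof -
      have int: "integrable P (\<lambda>\<omega>. matpow n W (Suc (t - u)) i j * LLR f M j k (X u \<omega> j))" if j: "j < n" for j
      proof (rule P.integrable_const_bound[where B = "\<bar>matpow n W (Suc (t - u)) i j\<bar> * L"])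
        show "AE \<omega> in P. norm (matpow n W (Suc (t - u)) i j * LLR f M j k (X u \<omega> j)) \<le> \<bar>matpow n W (Suc (t - u)) i j\<bar> * L"
          using LLRb[OF j kM Xsp[OF u _ j]] by (auto intro!: AE_I2 simp: abs_mult mult_left_mono)
        have p: "(\<lambda>y. y j) \<in> measurable (Pi\<^sub>M {..<n} \<mu>) (\<mu> j)"
          using j by (intro measurable_component_singleton) auto
        have lm: "LLR f M j k \<in> borel_measurable (\<mu> j)"
          unfolding LLR_def using dens_meas[OF j kM] dens_meas[OF j Mi] by measurable
        have "(\<lambda>\<omega>. LLR f M j k (X u \<omega> j)) \<in> borel_measurable P"
          using measurable_compose[OF measurable_compose[OF Xm[OF u] p] lm] by simp
        then show "(\<lambda>\<omega>. matpow n W (Suc (t - u)) i j * LLR f M j k (X u \<omega> j)) \<in> borel_measurable P"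
          by measurable
      qed
      have "P.expectation (Y t k u) = (\<Sum>j<n. P.expectation (\<lambda>\<omega>. matpow n W (Suc (t - u)) i j * LLR f M j k (X u \<omega> j)))"
        unfolding Y_def using int by (intro Bochner_Integration.integral_sum) auto
      also have "\<dots> = (\<Sum>j<n. matpow n W (Suc (t - u)) i j * P.expectation (\<lambda>\<omega>. LLR f M j k (X u \<omega> j)))"
        by simp
      also have "\<dots> = (\<Sum>j<n. matpow n W (Suc (t - u)) i j * (- h j))"
        using ELLR[OF u] by simp
      also have "\<dots> = - (\<Sum>j<n. matpow n W (Suc (t - u)) i j * h j)" by (simp add: sum_negf)
      finally show ?thesis .
    qed
    show ?thesis
      using ces evC eventually_ge_at_top[of 1]
    proof eventually_elim
      case (elim t)
      have tpos: "0 < real t" using elim(3) by simp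
      define \<mu>t where "\<mu>t = (\<Sum>u\<in>{1..t}. P.expectation (Y t k u))"
      have \<mu>t: "\<mu>t = - S t"
      proof -
        have "\<mu>t = (\<Sum>u\<in>{1..t}. - (\<Sum>j<n. matpow n W (Suc (t - u)) i j * h j))"
          unfolding \<mu>t_def using EY by (intro sum.cong) auto
        also have "\<dots> = - (\<Sum>u\<in>{1..t}. (\<Sum>j<n. matpow n W (Suc (t - u)) i j * h j))"
          by (simp add: sum_negf)
        also have "(\<Sum>u\<in>{1..t}. (\<Sum>j<n. matpow n W (Suc (t - u)) i j * h j)) = S t"
          unfolding S_def
          by (rule sum.reindex_bij_witness[of _ "\<lambda>r. t - r" "\<lambda>u. t - u"]) auto
        finally show ?thesis .
      qed
      interpret H: Hoeffding_ineq P "{1..t}" "Y t k" "\<lambda>_. -L" "\<lambda>_. L" \<mu>t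
      proof unfold_locales
        show "finite {1..t}" by simp
        have "P.indep_vars (\<lambda>_. borel) (\<lambda>u \<omega>. (\<lambda>y. \<Sum>j<n. matpow n W (Suc (t - u)) i j * LLR f M j k (y j)) (X u \<omega>)) {1..t}"
          by (rule P.indep_vars_compose2[OF P.indep_vars_subset[OF X_indep]]) (auto intro: gmeas[OF kM])
        then show "P.indep_vars (\<lambda>_. borel) (Y t k) {1..t}" unfolding Y_def[abs_def] by simp
        show "AE x in P. Y t k u x \<in> {- L..L}" if "u \<in> {1..t}" for u
        proof (rule AE_I2)
          fix x assume x: "x \<in> space P"
          have "\<bar>Y t k u x\<bar> \<le> L" using Ybd[OF _ x, of u t] that by auto
          then show "Y t k u x \<in> {- L..L}" by auto
        qed
      qed (simp add: \<mu>t_def)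
      define \<epsilon> where "\<epsilon> = \<alpha> * real t - C k + S t"
      have St: "S t \<ge> real t * (Kd k - \<alpha>/4)" using elim(1) tpos by (simp add: field_simps)
      have Ct: "C k \<le> real t * (\<alpha>/4)" using elim(2) tpos by (simp add: field_simps)
      have \<gamma>0: "0 \<le> Kd k + \<alpha>/2" using Kd0[OF kM] \<alpha>_pos by simp
      have \<epsilon>ge: "\<epsilon> \<ge> real t * (Kd k + \<alpha>/2)" unfolding \<epsilon>_def using St Ct by (simp add: algebra_simps)
      have \<epsilon>0: "0 \<le> \<epsilon>" using \<epsilon>ge \<gamma>0 tpos by (meson mult_nonneg_nonneg less_imp_le order_trans)
      have sumL: "(\<Sum>u\<in>{1..t}. (L - - L)\<^sup>2) = real t * (4 * L\<^sup>2)" by (simp add: power2_eq_square)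
      have sumLpos: "(\<Sum>u\<in>{1..t}. (L - - L)\<^sup>2) > 0" unfolding sumL using tpos A4_pos by simp
      have Beq: "B t k = {x \<in> space P. (\<Sum>u\<in>{1..t}. Y t k u x) \<ge> \<mu>t + \<epsilon>}"
        unfolding B_def \<mu>t \<epsilon>_def by simp
      have "measure P (B t k) \<le> exp (-2 * \<epsilon>\<^sup>2 / (\<Sum>u\<in>{1..t}. (L - - L)\<^sup>2))"
        unfolding Beq by (rule H.Hoeffding_ineq_ge[OF \<epsilon>0 sumLpos])
      also have "\<dots> \<le> exp (- real t * ((Kd k + \<alpha>/2)\<^sup>2 / (2*L\<^sup>2)))"
      proof -
        have sq: "(real t * (Kd k + \<alpha>/2))\<^sup>2 \<le> \<epsilon>\<^sup>2"
          using \<epsilon>ge \<gamma>0 tpos by (intro power_mono) auto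
        have L2: "0 < 4 * L\<^sup>2" using A4_pos by simp
        have "real t * ((Kd k + \<alpha>/2)\<^sup>2 / (2*L\<^sup>2)) = 2 * (real t * (Kd k + \<alpha>/2))\<^sup>2 / (real t * (4 * L\<^sup>2))"
          using tpos A4_pos by (simp add: field_simps power2_eq_square)
        also have "\<dots> \<le> 2 * \<epsilon>\<^sup>2 / (real t * (4 * L\<^sup>2))"
          using sq tpos L2 by (intro divide_right_mono) auto
        finally have "real t * ((Kd k + \<alpha>/2)\<^sup>2 / (2*L\<^sup>2)) \<le> 2 * \<epsilon>\<^sup>2 / (real t * (4 * L\<^sup>2))" .
        then show ?thesis unfolding sumL by simp
      qed
      finally show ?case .
    qed
  qed
  have fin: "finite {1..M-1}" by simp
  have evall: "eventually (\<lambda>t. \<forall>k\<in>{1..M-1}. measure P (B t k) \<le> exp (- real t * ((Kd k + \<alpha>/2)\<^sup>2 / (2*L\<^sup>2)))) sequentially"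
    using stepB by (intro eventually_ball_finite fin) auto
  have ev2: "eventually (\<lambda>t. exp (-\<alpha> * real t) \<le> 1/2) sequentially"
    unfolding eventually_sequentially
  proof (intro exI allI impI)
    fix t assume "nat \<lceil>ln 2 / \<alpha>\<rceil> \<le> t"
    then have "ln 2 / \<alpha> \<le> real t" by linarith
    then have "ln 2 \<le> \<alpha> * real t" using \<alpha>_pos by (simp add: divide_le_eq mult.commute)
    then have "exp (-\<alpha> * real t) \<le> exp (- ln 2)" by simp
    also have "\<dots> = 1/2" by (simp add: exp_minus)
    finally show "exp (-\<alpha> * real t) \<le> 1/2" .
  qed
  have ev: "eventually (\<lambda>t. measure P (E t) \<le> real (M-1) * exp (- real t * \<rho>)) sequentially"
    using evall ev2 eventually_ge_at_top[of 1]
  proof eventually_elim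
    case (elim t)
    have Bs: "(\<lambda>k. B t k) ` {1..M-1} \<subseteq> sets P" using Bsets by auto
    have "measure P (E t) \<le> measure P (\<Union>k\<in>{1..M-1}. B t k)"
    proof (cases "E t \<in> sets P")
      case True
      then show ?thesis using stepA[OF elim(3) elim(2)] Bs
        by (intro P.finite_measure_mono) auto
    next
      case False
      then show ?thesis by (simp add: measure_notin_sets)
    qed
    also have "\<dots> \<le> (\<Sum>k\<in>{1..M-1}. measure P (B t k))"
      using Bs by (intro P.finite_measure_subadditive_finite) auto
    also have "\<dots> \<le> (\<Sum>k\<in>{1..M-1}. exp (- real t * \<rho>))"
    proof (intro sum_mono)
      fix k assume k: "k \<in> {1..M-1}"
      have "\<rho> \<le> (Kd k + \<alpha>/2)\<^sup>2 / (2*L\<^sup>2)" unfolding \<rho>_def using k by (intro Min_le) auto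
      then have "real t * \<rho> \<le> real t * ((Kd k + \<alpha>/2)\<^sup>2 / (2*L\<^sup>2))"
        by (intro mult_left_mono) auto
      then have "exp (- real t * ((Kd k + \<alpha>/2)\<^sup>2 / (2*L\<^sup>2))) \<le> exp (- real t * \<rho>)"
        by (simp only: exp_le_cancel_iff mult_minus_left neg_le_iff_le)
      moreover have "measure P (B t k) \<le> exp (- real t * ((Kd k + \<alpha>/2)\<^sup>2 / (2*L\<^sup>2)))"
        using elim(1) k by blast
      ultimately show "measure P (B t k) \<le> exp (- real t * \<rho>)" by linarith
    qed
    also have "\<dots> = real (M-1) * exp (- real t * \<rho>)" by simp
    finally show ?case .
  qed
  have lim: "limsup (\<lambda>t. ereal (1 / real t) * eln (measure P (E t))) \<le> ereal (- \<rho>)"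
  proof -
    have "limsup (\<lambda>t. ereal (1 / real t) * eln (measure P (E t)))
        \<le> limsup (\<lambda>t. ereal (ln (real (M-1)) / real t - \<rho>))"
    proof (intro Limsup_mono)
      show "\<forall>\<^sub>F t in sequentially. ereal (1 / real t) * eln (measure P (E t)) \<le> ereal (ln (real (M-1)) / real t - \<rho>)"
        using ev eventually_ge_at_top[of 1]
      proof eventually_elim
        case (elim t)
        define p where "p = measure P (E t)"
        have t0: "0 < real t" using elim(2) by simp
        have M1': "0 < real (M-1)" using M2 by simp
        show ?case
        proof (cases "p \<le> 0")
          case True
          then show ?thesis using t0 unfolding p_def[symmetric] by (simp add: eln_def)
        next
          case False
          then have p0: "0 < p" by simp
          have "ln p \<le> ln (real (M-1) * exp (- real t * \<rho>))"
            using elim(1) p0 M1' unfolding p_def by simp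
          also have "\<dots> = ln (real (M-1)) - real t * \<rho>" using M1' by (simp add: ln_mult)
          finally have "ln p / real t \<le> (ln (real (M-1)) - real t * \<rho>) / real t"
            using t0 by (intro divide_right_mono) auto
          also have "\<dots> = ln (real (M-1)) / real t - \<rho>" using t0 by (simp add: diff_divide_distrib)
          finally show ?thesis using p0 t0 unfolding p_def[symmetric] by (simp add: eln_def)
        qed
      qed
    qed
    also have "\<dots> = ereal (- \<rho>)"
    proof (intro lim_imp_Limsup)
      show "\<not> trivial_limit (sequentially :: nat filter)" by simp
      have "(\<lambda>t. ln (real (M-1)) / real t - \<rho>) \<longlonglongrightarrow> 0 - \<rho>"
        by (intro tendsto_diff lim_const_over_n tendsto_const)
      then show "(\<lambda>t. ereal (ln (real (M-1)) / real t - \<rho>)) \<longlonglongrightarrow> ereal (- \<rho>)"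
        by (intro tendsto_ereal) simp
    qed
    finally show ?thesis .
  qed
  have ab: "(Kd k)\<^sup>2 / (2 * L\<^sup>2 * real (chain_period n W)) \<le> (Kd k + \<alpha>/2)\<^sup>2 / (2*L\<^sup>2)"
    if k: "k \<in> {1..M-1}" for k
  proof -
    have K0: "0 \<le> Kd k" using Kd0 k by auto
    have L2: "0 < 2 * L\<^sup>2" using A4_pos by simp
    have sq: "(Kd k)\<^sup>2 \<le> (Kd k + \<alpha>/2)\<^sup>2" using K0 \<alpha>_pos by (intro power_mono) auto
    show ?thesis
    proof (cases "chain_period n W = 0")
      case True
      then show ?thesis using L2 by simp
    next
      case False
      then have d1: "1 \<le> real (chain_period n W)" by simp
      have "(Kd k)\<^sup>2 / (2 * L\<^sup>2 * real (chain_period n W)) \<le> (Kd k)\<^sup>2 / (2 * L\<^sup>2)"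
        using d1 L2 by (intro divide_left_mono) (auto intro: mult_pos_pos)
      also have "\<dots> \<le> (Kd k + \<alpha>/2)\<^sup>2 / (2*L\<^sup>2)" using sq L2 by (intro divide_right_mono) auto
      finally show ?thesis .
    qed
  qed
  have rho: "Min ((\<lambda>k. (Kd k)\<^sup>2 / (2 * L\<^sup>2 * real (chain_period n W))) ` {1..M - 1}) \<le> \<rho>"
    unfolding \<rho>_def using ne
  proof (subst Min_ge_iff, simp, simp, intro ballI)
    fix b assume "b \<in> (\<lambda>k. (Kd k + \<alpha>/2)\<^sup>2 / (2*L\<^sup>2)) ` {1..M-1}"
    then obtain k where k: "k \<in> {1..M-1}" and b: "b = (Kd k + \<alpha>/2)\<^sup>2 / (2*L\<^sup>2)" by auto
    have "Min ((\<lambda>k. (Kd k)\<^sup>2 / (2 * L\<^sup>2 * real (chain_period n W))) ` {1..M - 1})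
        \<le> (Kd k)\<^sup>2 / (2 * L\<^sup>2 * real (chain_period n W))" using k by (intro Min_le) auto
    then show "Min ((\<lambda>k. (Kd k)\<^sup>2 / (2 * L\<^sup>2 * real (chain_period n W))) ` {1..M - 1}) \<le> b"
      using ab[OF k] b by simp
  qed
  from lim rho show ?thesis unfolding E_def Kd_def by (meson ereal_less_eq(3) neg_le_iff_le order.trans)
qed


end
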